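(* For a parameter vector $p=(b,\beta,\beta_1,\gamma,\varepsilon_1,\varepsilon_2,\lambda,\alpha)$ consider the planar system $$s'=b+\gamma+(\varepsilon_2-b-\beta-\gamma)s-\gamma i-\varepsilon_2 s^2+(\varepsilon_1-\varepsilon_2-\lambda)is,$$ $$i'=\beta_1 s+(\varepsilon_2-\varepsilon_1-\alpha-b)i+(\lambda-\varepsilon_2)is+(\varepsilon_1-\varepsilon_2)i^2$$ on $D_1=\{(s,i): s\ge0,\ i\ge0,\ s+i\le1\}$. Let $\Omega\subset\mathbb{R}^8_+$ be the open set of admissible parameter values (all parameters positive and $\beta_2=\beta-\beta_1>0$), and let $\Omega_1\subset\Omega$ be the set of parameter values for which this system has a nonhyperbolic rest point in $D_1$. Then $\Omega_1$ is a closed, nonempty subset of $\Omega$ of Lebesgue measure zero.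
   Context: A rest point is hyperbolic if all eigenvalues of the linearization there have nonzero real parts. The system is the reduction, via $r=1-s-i$, of the SIRS proportions system with birth rate $b$, disease transfer rate $\beta=\beta_1+\beta_2$, recovery rate $\gamma$, excess death rates $\varepsilon_1,\varepsilon_2$, contact rate $\lambda$ and removal rate $\alpha$. *)

theory Defs
  imports "HOL-Analysis.Analysis"
begin

text \<open>Parameter vector p = (b, beta, beta1, gamma, eps1, eps2, lambda, alpha) in R^8,
  indexed p$1 ... p$8 in this order. State vector x = (s, i) in R^2, x$1 = s, x$2 = i.\<close>

definition sirs_field :: "real^8 \<Rightarrow> real^2 \<Rightarrow> real^2" where
  "sirs_field p x =
    (let b = p$1; \<beta> = p$2; \<beta>\<^sub>1 = p$3; \<gamma> = p$4; \<epsilon>\<^sub>1 = p$5; \<epsilon>\<^sub>2 = p$6; lam = p$7; \<alpha> = p$8;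
         s = x$1; i = x$2
     in (\<chi> k. if k = 1 then
                b + \<gamma> + (\<epsilon>\<^sub>2 - b - \<beta> - \<gamma>) * s - \<gamma> * i - \<epsilon>\<^sub>2 * s^2 + (\<epsilon>\<^sub>1 - \<epsilon>\<^sub>2 - lam) * i * s
              else
                \<beta>\<^sub>1 * s + (\<epsilon>\<^sub>2 - \<epsilon>\<^sub>1 - \<alpha> - b) * i + (lam - \<epsilon>\<^sub>2) * i * s + (\<epsilon>\<^sub>1 - \<epsilon>\<^sub>2) * i^2))"

definition D1 :: "(real^2) set" where
  "D1 = {x. x$1 \<ge> 0 \<and> x$2 \<ge> 0 \<and> x$1 + x$2 \<le> 1}"

definition Omega :: "(real^8) set" where
  "Omega = {p. (\<forall>k. p$k > 0) \<and> p$2 - p$3 > 0}"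

definition is_eigenvalue :: "real^'n^'n \<Rightarrow> complex \<Rightarrow> bool" where
  "is_eigenvalue J \<mu> \<longleftrightarrow>
     (\<exists>v :: complex^'n. v \<noteq> 0 \<and> (\<chi> i j. complex_of_real (J$i$j)) *v v = \<mu> *s v)"

definition nonhyperbolic_rest_point :: "(real^'n \<Rightarrow> real^'n) \<Rightarrow> real^'n \<Rightarrow> bool" where
  "nonhyperbolic_rest_point F x \<longleftrightarrow>
     F x = 0 \<and> (\<exists>J :: real^'n^'n. (F has_derivative (\<lambda>h. J *v h)) (at x) \<and>
                               (\<exists>\<mu>. is_eigenvalue J \<mu> \<and> Re \<mu> = 0))"

definition Omega1 :: "(real^8) set" where
  "Omega1 = {p \<in> Omega. \<exists>x \<in> D1. nonhyperbolic_rest_point (sirs_field p) x}"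

end

theory Submission
  imports Defs
begin

definition J0 :: "real^8 \<Rightarrow> real^2 \<Rightarrow> real^2^2" where
 "J0 p x = (\<chi> r c. if r = 1 then
     (if c = 1 then p$6 - p$1 - p$2 - p$4 - 2*p$6*x$1 + (p$5-p$6-p$7)*x$2
      else - p$4 + (p$5-p$6-p$7)*x$1)
   else (if c = 1 then p$3 + (p$7-p$6)*x$2
      else p$6 - p$5 - p$8 - p$1 + (p$7-p$6)*x$1 + 2*(p$5-p$6)*x$2))"

lemma sirs1: "sirs_field p x $ 1 = p$1 + p$4 + (p$6 - p$1 - p$2 - p$4) * x$1 - p$4 * x$2 - p$6 * (x$1)^2 + (p$5 - p$6 - p$7) * x$2 * x$1"
  by (simp add: sirs_field_def Let_def)
lemma sirs2: "sirs_field p x $ 2 = p$3 * x$1 + (p$6 - p$5 - p$8 - p$1) * x$2 + (p$7 - p$6) * x$2 * x$1 + (p$5 - p$6) * (x$2)^2"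
  by (simp add: sirs_field_def Let_def)

lemma has_derivative_vec_nth_my: "((\<lambda>x. x $ k) has_derivative (\<lambda>h. h $ k)) F"
  by (rule bounded_linear_imp_has_derivative) (rule bounded_linear_vec_nth)

lemma sirs_deriv: "(sirs_field p has_derivative (\<lambda>h. J0 p x *v h)) (at x)"
proof (subst has_derivative_componentwise_within, intro ballI)
  fix e :: "real^2" assume "e \<in> Basis"
  then obtain j where e: "e = axis j 1" by (auto simp: Basis_vec_def)
  have "((\<lambda>y. sirs_field p y $ j) has_derivative (\<lambda>h. (J0 p x *v h) $ j)) (at x)"
  proof (cases "j = 1")
    case True
    show ?thesis unfolding True sirs1
      by (rule derivative_eq_intros has_derivative_vec_nth_my refl)+
         (simp add: J0_def matrix_vector_mult_def sum_2 algebra_simps power2_eq_square)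
  next
    case False
    then have j2: "j = 2" using exhaust_2 by blast
    show ?thesis unfolding j2 sirs2
      by (rule derivative_eq_intros has_derivative_vec_nth_my refl)+
         (simp add: J0_def matrix_vector_mult_def sum_2 algebra_simps power2_eq_square)
  qed
  then show "((\<lambda>y. sirs_field p y \<bullet> e) has_derivative (\<lambda>h. (J0 p x *v h) \<bullet> e)) (at x)"
    by (simp add: e cart_eq_inner_axis)
qed
lemma eig2: "is_eigenvalue (J::real^2^2) \<mu> \<longleftrightarrow> (\<exists>v1 v2. (v1 \<noteq> 0 \<or> v2 \<noteq> 0) \<and>
   of_real (J$1$1) * v1 + of_real (J$1$2) * v2 = \<mu> * v1 \<and> of_real (J$2$1) * v1 + of_real (J$2$2) * v2 = \<mu> * v2)"
proof
  assume "is_eigenvalue J \<mu>"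
  then obtain v :: "complex^2" where v: "v \<noteq> 0" "(\<chi> i j. complex_of_real (J$i$j)) *v v = \<mu> *s v"
    unfolding is_eigenvalue_def by blast
  from v(1) have "v$1 \<noteq> 0 \<or> v$2 \<noteq> 0" by (auto simp: vec_eq_iff forall_2)
  moreover from v(2) have "of_real (J$1$1) * v$1 + of_real (J$1$2) * v$2 = \<mu> * v$1 \<and> of_real (J$2$1) * v$1 + of_real (J$2$2) * v$2 = \<mu> * v$2"
    by (auto simp: vec_eq_iff forall_2 matrix_vector_mult_def sum_2)
  ultimately show "\<exists>v1 v2. (v1 \<noteq> 0 \<or> v2 \<noteq> 0) \<and>
   of_real (J$1$1) * v1 + of_real (J$1$2) * v2 = \<mu> * v1 \<and> of_real (J$2$1) * v1 + of_real (J$2$2) * v2 = \<mu> * v2" by blast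
next
  assume "\<exists>v1 v2. (v1 \<noteq> 0 \<or> v2 \<noteq> 0) \<and>
   of_real (J$1$1) * v1 + of_real (J$1$2) * v2 = \<mu> * v1 \<and> of_real (J$2$1) * v1 + of_real (J$2$2) * v2 = \<mu> * v2"
  then obtain v1 v2 where h: "v1 \<noteq> 0 \<or> v2 \<noteq> 0" "of_real (J$1$1) * v1 + of_real (J$1$2) * v2 = \<mu> * v1"
     "of_real (J$2$1) * v1 + of_real (J$2$2) * v2 = \<mu> * v2" by blast
  define v :: "complex^2" where "v = (\<chi> k. if k = 1 then v1 else v2)"
  have "v \<noteq> 0" using h(1) by (auto simp: v_def vec_eq_iff forall_2)
  moreover have "(\<chi> i j. complex_of_real (J$i$j)) *v v = \<mu> *s v"
    using h(2,3) by (auto simp: v_def vec_eq_iff forall_2 matrix_vector_mult_def sum_2)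
  ultimately show "is_eigenvalue J \<mu>" unfolding is_eigenvalue_def by blast
qed

definition Ccond :: "real \<Rightarrow> real \<Rightarrow> real \<Rightarrow> real \<Rightarrow> bool" where
  "Ccond a b c d \<longleftrightarrow> a*d - b*c = 0 \<or> (a + d = 0 \<and> a*d - b*c \<ge> 0)"

lemma eig_fwd:
  fixes a b c d :: real and v1 v2 \<mu> :: complex
  assumes nz: "v1 \<noteq> 0 \<or> v2 \<noteq> 0" and e1: "of_real a * v1 + of_real b * v2 = \<mu> * v1"
    and e2: "of_real c * v1 + of_real d * v2 = \<mu> * v2" and re: "Re \<mu> = 0"
  shows "Ccond a b c d"
proof -
  define P where "P = (of_real a - \<mu>)*(of_real d - \<mu>) - of_real b * of_real c"
  have "P * v1 = (of_real d - \<mu>) * (of_real a * v1 + of_real b * v2 - \<mu> * v1) - of_real b * (of_real c * v1 + of_real d * v2 - \<mu> * v2)"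
    by (simp add: P_def algebra_simps)
  also have "\<dots> = 0" using e1 e2 by simp
  finally have p1: "P * v1 = 0" .
  have "P * v2 = (of_real a - \<mu>) * (of_real c * v1 + of_real d * v2 - \<mu> * v2) - of_real c * (of_real a * v1 + of_real b * v2 - \<mu> * v1)"
    by (simp add: P_def algebra_simps)
  also have "\<dots> = 0" using e1 e2 by simp
  finally have p2: "P * v2 = 0" .
  have P0: "P = 0" using p1 p2 nz by auto
  obtain w where mu: "\<mu> = \<i> * of_real w" using re by (metis complex_eq mult.commute mult_zero_left add_0 of_real_0 complex_of_real_def) 
  have "P = of_real (a*d - b*c - w^2) - \<i> * of_real (w*(a+d))"
    by (simp add: P_def mu algebra_simps power2_eq_square)
  with P0 have "a*d - b*c - w^2 = 0" "w*(a+d) = 0"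
    by (simp_all add: complex_eq_iff)
  then show ?thesis unfolding Ccond_def by (metis mult_eq_0_iff power2_eq_square zero_le_square diff_eq_eq add_0)
qed

lemma eig_bwd:
  fixes a b c d :: real
  assumes "Ccond a b c d"
  shows "\<exists>\<mu> v1 v2. (v1 \<noteq> 0 \<or> v2 \<noteq> 0) \<and> of_real a * v1 + of_real b * v2 = \<mu> * v1 \<and>
      of_real c * v1 + of_real d * v2 = \<mu> * v2 \<and> Re \<mu> = 0"
proof (cases "a*d - b*c = 0")
  case True
  show ?thesis
  proof (cases "b \<noteq> 0 \<or> a \<noteq> 0")
    case True
    then show ?thesis using \<open>a*d - b*c = 0\<close>
      by (intro exI[of _ 0] exI[of _ "of_real b"] exI[of _ "- of_real a"])
         (auto simp: algebra_simps simp flip: of_real_mult of_real_diff)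
  next
    case False
    then have ab: "a = 0" "b = 0" by auto
    show ?thesis
    proof (cases "d \<noteq> 0 \<or> c \<noteq> 0")
      case True
      then show ?thesis using ab
        by (intro exI[of _ 0] exI[of _ "of_real d"] exI[of _ "- of_real c"])
           (auto simp: algebra_simps)
    next
      case False
      then show ?thesis using ab
        by (intro exI[of _ 0] exI[of _ 1] exI[of _ 0]) auto
    qed
  qed
next
  case False
  with assms have tr: "d = - a" and dpos: "a*d - b*c > 0" unfolding Ccond_def by auto
  define w where "w = sqrt (a*d - b*c)"
  have w: "w > 0" "w^2 = a*d - b*c" using dpos by (auto simp: w_def)
  define \<mu> where "\<mu> = \<i> * of_real w"
  have mu2: "\<mu> * \<mu> = - of_real (a*d - b*c)"
    by (simp add: \<mu>_def algebra_simps w(2)[symmetric] power2_eq_square)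
  have "Im (\<mu> - of_real a) = w" by (simp add: \<mu>_def)
  then have nz: "\<mu> - of_real a \<noteq> 0" using w(1) by auto
  have e1: "of_real a * of_real b + of_real b * (\<mu> - of_real a) = \<mu> * of_real b"
    by (simp add: algebra_simps)
  have e2: "of_real c * of_real b + of_real d * (\<mu> - of_real a) = \<mu> * (\<mu> - of_real a)"
  proof -
    have "\<mu> * (\<mu> - of_real a) = \<mu> * \<mu> - \<mu> * of_real a" by (simp add: algebra_simps)
    also have "\<dots> = - of_real (a*d - b*c) - \<mu> * of_real a" using mu2 by simp
    finally show ?thesis by (simp add: tr algebra_simps)
  qed
  show ?thesis
    by (rule exI[of _ \<mu>], rule exI[of _ "of_real b"], rule exI[of _ "\<mu> - of_real a"])
       (use nz e1 e2 in \<open>auto simp: \<mu>_def\<close>)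
qed

lemma nhyp_iff: "nonhyperbolic_rest_point (sirs_field p) x \<longleftrightarrow>
   sirs_field p x = 0 \<and> Ccond (J0 p x $1$1) (J0 p x $1$2) (J0 p x $2$1) (J0 p x $2$2)"
proof
  assume "nonhyperbolic_rest_point (sirs_field p) x"
  then obtain J \<mu> where h: "sirs_field p x = 0" "(sirs_field p has_derivative (\<lambda>h. J *v h)) (at x)"
    "is_eigenvalue J \<mu>" "Re \<mu> = 0" unfolding nonhyperbolic_rest_point_def by blast
  have "(\<lambda>h. J *v h) = (\<lambda>h. J0 p x *v h)" using has_derivative_unique[OF h(2) sirs_deriv] .
  then have "J = J0 p x" by (metis matrix_of_matrix_vector_mul)
  then show "sirs_field p x = 0 \<and> Ccond (J0 p x $1$1) (J0 p x $1$2) (J0 p x $2$1) (J0 p x $2$2)"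
    using h eig_fwd unfolding eig2 by blast
next
  assume h: "sirs_field p x = 0 \<and> Ccond (J0 p x $1$1) (J0 p x $1$2) (J0 p x $2$1) (J0 p x $2$2)"
  then obtain \<mu> where "is_eigenvalue (J0 p x) \<mu>" "Re \<mu> = 0" using eig_bwd unfolding eig2 by blast
  then show "nonhyperbolic_rest_point (sirs_field p) x"
    unfolding nonhyperbolic_rest_point_def using h sirs_deriv by blast
qed

definition betaf :: "real \<Rightarrow> real \<Rightarrow> real \<Rightarrow> real \<Rightarrow> real \<Rightarrow> real \<Rightarrow> real \<Rightarrow> real" where
  "betaf b g e1 e2 l s i = (b*(1-s) + g*(1-s-i) + e2 * s*(1-s) + (e1-e2-l)*i * s)/s"
definition beta1f :: "real \<Rightarrow> real \<Rightarrow> real \<Rightarrow> real \<Rightarrow> real \<Rightarrow> real \<Rightarrow> real \<Rightarrow> real" where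
  "beta1f b e1 e2 l a s i = ((e1+a+b-e2)*i - (l-e2)*i * s - (e1-e2)*i^2)/s"
definition J11f :: "real \<Rightarrow> real \<Rightarrow> real \<Rightarrow> real \<Rightarrow> real \<Rightarrow> real \<Rightarrow> real \<Rightarrow> real" where
  "J11f b g e1 e2 l s i = e2 - b - betaf b g e1 e2 l s i - g - 2*e2 * s + (e1-e2-l)*i"
definition Df :: "real \<Rightarrow> real \<Rightarrow> real \<Rightarrow> real \<Rightarrow> real \<Rightarrow> real \<Rightarrow> real" where
  "Df b e1 e2 l s i = e2-e1-b+(l-e2) * s+2*(e1-e2)*i"
definition A12f :: "real \<Rightarrow> real \<Rightarrow> real \<Rightarrow> real \<Rightarrow> real \<Rightarrow> real" where
  "A12f g e1 e2 l s = -g+(e1-e2-l) * s"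
definition Kf :: "real \<Rightarrow> real \<Rightarrow> real \<Rightarrow> real \<Rightarrow> real \<Rightarrow> real \<Rightarrow> real" where
  "Kf b e1 e2 l s i = (e1+b-e2)*i - (l-e2)*i * s - (e1-e2)*i^2"
definition cf :: "real \<Rightarrow> real \<Rightarrow> real \<Rightarrow> real \<Rightarrow> real \<Rightarrow> real \<Rightarrow> real \<Rightarrow> real" where
  "cf b g e1 e2 l s i = J11f b g e1 e2 l s i * s + A12f g e1 e2 l s * i"
definition Atr :: "real \<Rightarrow> real \<Rightarrow> real \<Rightarrow> real \<Rightarrow> real \<Rightarrow> real \<Rightarrow> real \<Rightarrow> real" where
  "Atr b g e1 e2 l s i = J11f b g e1 e2 l s i + Df b e1 e2 l s i"
definition Adet :: "real \<Rightarrow> real \<Rightarrow> real \<Rightarrow> real \<Rightarrow> real \<Rightarrow> real \<Rightarrow> real \<Rightarrow> real" where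
  "Adet b g e1 e2 l s i = (J11f b g e1 e2 l s i * Df b e1 e2 l s i * s - A12f g e1 e2 l s * Kf b e1 e2 l s i
      - A12f g e1 e2 l s * (l-e2)*i * s) / cf b g e1 e2 l s i"
definition Bc :: "real \<Rightarrow> real \<Rightarrow> real \<Rightarrow> real \<Rightarrow> real \<Rightarrow> real \<Rightarrow> real" where
  "Bc g e1 e2 l s i = -g - e2 * s^2 + (e1-e2-l) * s*i"

definition gtr :: "real^8 \<Rightarrow> real^8" where
  "gtr u = (\<chi> k. if k = 2 then betaf (u$1) (u$4) (u$5) (u$6) (u$7) (u$2) (u$3)
     else if k = 3 then beta1f (u$1) (u$5) (u$6) (u$7) (Atr (u$1) (u$4) (u$5) (u$6) (u$7) (u$2) (u$3)) (u$2) (u$3)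
     else if k = 8 then Atr (u$1) (u$4) (u$5) (u$6) (u$7) (u$2) (u$3) else u$k)"
definition gdet :: "real^8 \<Rightarrow> real^8" where
  "gdet u = (\<chi> k. if k = 2 then betaf (u$1) (u$4) (u$5) (u$6) (u$7) (u$2) (u$3)
     else if k = 3 then beta1f (u$1) (u$5) (u$6) (u$7) (Adet (u$1) (u$4) (u$5) (u$6) (u$7) (u$2) (u$3)) (u$2) (u$3)
     else if k = 8 then Adet (u$1) (u$4) (u$5) (u$6) (u$7) (u$2) (u$3) else u$k)"
definition gc :: "real^8 \<Rightarrow> real^8" where
  "gc u = (\<chi> k. if k = 1 then Bc (u$4) (u$5) (u$6) (u$7) (u$2) (u$3)
     else if k = 2 then betaf (Bc (u$4) (u$5) (u$6) (u$7) (u$2) (u$3)) (u$4) (u$5) (u$6) (u$7) (u$2) (u$3)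
     else if k = 3 then beta1f (Bc (u$4) (u$5) (u$6) (u$7) (u$2) (u$3)) (u$5) (u$6) (u$7) (u$8) (u$2) (u$3)
     else u$k)"

lemma vec_differentiable_on:
  fixes g :: "'a::euclidean_space \<Rightarrow> real^'n"
  assumes "\<And>k u. u \<in> S \<Longrightarrow> (\<lambda>u. g u $ k) differentiable (at u)"
  shows "g differentiable_on S"
  unfolding differentiable_on_def
proof
  fix u assume u: "u \<in> S"
  have "g differentiable (at u)"
  proof (subst differentiable_componentwise_within, intro ballI)
    fix e :: "real^'n" assume "e \<in> Basis"
    then obtain j where e: "e = axis j 1" by (auto simp: Basis_vec_def)
    show "(\<lambda>x. g x \<bullet> e) differentiable at u"
      using assms[OF u, of j] by (simp add: e cart_eq_inner_axis)
  qed
  then show "g differentiable (at u within S)" by (rule differentiable_at_withinI)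
qed

lemma differentiable_vec_nth_my[derivative_intros]: "(\<lambda>x. x $ k) differentiable F"
  unfolding differentiable_def using has_derivative_vec_nth_my by blast

lemma gtr_diff: "gtr differentiable_on {u. u$2 \<noteq> 0}"
proof (rule vec_differentiable_on)
  fix k and u :: "real^8" assume u: "u \<in> {u. u$2 \<noteq> 0}"
  show "(\<lambda>u. gtr u $ k) differentiable (at u)"
    unfolding gtr_def using u
    by (cases "k = 2"; cases "k = 3"; cases "k = 8")
       (simp_all add: betaf_def beta1f_def Atr_def J11f_def Df_def, (auto intro!: derivative_intros)?)
qed

lemma gdet_diff: "gdet differentiable_on {u. u$2 \<noteq> 0 \<and> cf (u$1) (u$4) (u$5) (u$6) (u$7) (u$2) (u$3) \<noteq> 0}"
proof (rule vec_differentiable_on)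
  fix k and u :: "real^8" assume u: "u \<in> {u. u$2 \<noteq> 0 \<and> cf (u$1) (u$4) (u$5) (u$6) (u$7) (u$2) (u$3) \<noteq> 0}"
  show "(\<lambda>u. gdet u $ k) differentiable (at u)"
    unfolding gdet_def using u
    by (cases "k = 2"; cases "k = 3"; cases "k = 8")
       (simp_all add: betaf_def beta1f_def Adet_def J11f_def Df_def A12f_def Kf_def, (auto intro!: derivative_intros simp: cf_def J11f_def betaf_def A12f_def)?)
qed

lemma gc_diff: "gc differentiable_on {u. u$2 \<noteq> 0}"
proof (rule vec_differentiable_on)
  fix k and u :: "real^8" assume u: "u \<in> {u. u$2 \<noteq> 0}"
  show "(\<lambda>u. gc u $ k) differentiable (at u)"
    unfolding gc_def using u
    by (cases "k = 1"; cases "k = 2"; cases "k = 3")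
       (simp_all add: betaf_def beta1f_def Bc_def, (auto intro!: derivative_intros)?)
qed


lemma num8_test: "(1::8) \<noteq> 2 \<and> (3::8) \<noteq> 8 \<and> (4::8) \<noteq> 8 \<and> (1::8) \<noteq> 8 \<and> (7::8) \<noteq> 8 \<and> (2::8) \<noteq> 3"
  by simp

lemma cover:
  assumes p: "p \<in> Omega" and x: "x \<in> D1" and F: "sirs_field p x = 0"
    and C: "Ccond (J0 p x $1$1) (J0 p x $1$2) (J0 p x $2$1) (J0 p x $2$2)"
  shows "p \<in> gtr ` {u. u$8 = 0 \<and> u$2 \<noteq> 0} \<union>
      gdet ` {u. u$8 = 0 \<and> u$2 \<noteq> 0 \<and> cf (u$1) (u$4) (u$5) (u$6) (u$7) (u$2) (u$3) \<noteq> 0} \<union>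
      gc ` {u. u$1 = 0 \<and> u$2 \<noteq> 0}"
proof -
  define b where "b = p$1"
  define be where "be = p$2"
  define b1 where "b1 = p$3"
  define g where "g = p$4"
  define e1 where "e1 = p$5"
  define e2 where "e2 = p$6"
  define l where "l = p$7"
  define a where "a = p$8"
  define s where "s = x$1"
  define i where "i = x$2"
  have pos: "b > 0" "g > 0" using p by (auto simp: Omega_def b_def g_def)
  have xs: "s \<ge> 0" "i \<ge> 0" "s + i \<le> 1" using x by (auto simp: D1_def s_def i_def)
  have F1: "b + g + (e2 - b - be - g) * s - g * i - e2 * s^2 + (e1 - e2 - l) * i * s = 0"
    using F sirs1[of p x] by (simp add: b_def be_def g_def e1_def e2_def l_def s_def i_def)
  have F2: "b1 * s + (e2 - e1 - a - b) * i + (l - e2) * i * s + (e1 - e2) * i^2 = 0"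
    using F sirs2[of p x] by (simp add: b_def b1_def a_def e1_def e2_def l_def s_def i_def)
  have s0: "s \<noteq> 0"
  proof
    assume "s = 0"
    with F1 have "b + g * (1 - i) = 0" by (simp add: algebra_simps)
    moreover have "g * (1 - i) \<ge> 0" using pos xs \<open>s = 0\<close> by simp
    ultimately show False using pos by linarith
  qed
  have hbe: "be = betaf b g e1 e2 l s i"
    using F1 s0 unfolding betaf_def by (simp add: field_simps power2_eq_square; simp add: algebra_simps)
  have hb1s: "b1 * s = Kf b e1 e2 l s i + a * i"
    using F2 unfolding Kf_def by (simp add: algebra_simps power2_eq_square)
  have hb1: "b1 = beta1f b e1 e2 l a s i"
    using hb1s s0 unfolding beta1f_def Kf_def by (simp add: field_simps)
  have "J0 p x $1$1 = e2 - b - be - g - 2*e2 * s + (e1-e2-l)*i"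
    by (simp add: J0_def b_def be_def g_def e1_def e2_def l_def s_def i_def)
  then have J11: "J0 p x $1$1 = J11f b g e1 e2 l s i"
    unfolding J11f_def hbe by simp
  have J12: "J0 p x $1$2 = A12f g e1 e2 l s"
    by (simp add: J0_def A12f_def g_def e1_def e2_def l_def s_def)
  have J21: "J0 p x $2$1 = b1 + (l - e2) * i"
    by (simp add: J0_def b1_def e2_def l_def i_def)
  have J22: "J0 p x $2$2 = Df b e1 e2 l s i - a"
    by (simp add: J0_def Df_def b_def a_def e1_def e2_def l_def s_def i_def)
  have u0s: "u $ 1 = b" "u $ 4 = g" "u $ 5 = e1" "u $ 6 = e2" "u $ 7 = l"
    if "u = (\<chi> k::8. if k = 2 then s else if k = 3 then i else if k = 8 then (0::real) else p$k)" for u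
    using that by (simp_all add: b_def g_def e1_def e2_def l_def)
  define u0 where "u0 = (\<chi> k::8. if k = 2 then s else if k = 3 then i else if k = 8 then (0::real) else p$k)"
  have u0: "u0$1 = b" "u0$2 = s" "u0$3 = i" "u0$4 = g" "u0$5 = e1" "u0$6 = e2" "u0$7 = l" "u0$8 = 0"
    by (simp_all add: u0_def b_def g_def e1_def e2_def l_def)
  define u1 where "u1 = (\<chi> k::8. if k = 1 then 0 else if k = 2 then s else if k = 3 then i else p$k)"
  have u1: "u1$1 = 0" "u1$2 = s" "u1$3 = i" "u1$4 = g" "u1$5 = e1" "u1$6 = e2" "u1$7 = l" "u1$8 = a"
    by (simp_all add: u1_def a_def g_def e1_def e2_def l_def)
  have pk: "p$1 = b" "p$2 = be" "p$3 = b1" "p$8 = a"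
    by (simp_all add: b_def be_def b1_def a_def)
  from C have "J11f b g e1 e2 l s i + (Df b e1 e2 l s i - a) = 0 \<or>
     J11f b g e1 e2 l s i * (Df b e1 e2 l s i - a) - A12f g e1 e2 l s * (b1 + (l-e2)*i) = 0"
    unfolding Ccond_def J11 J12 J21 J22 by auto
  then show ?thesis
  proof
    assume tr: "J11f b g e1 e2 l s i + (Df b e1 e2 l s i - a) = 0"
    then have ha: "a = Atr b g e1 e2 l s i" unfolding Atr_def by simp
    have "p = gtr u0"
    proof (subst vec_eq_iff, intro allI)
      fix k :: 8
      show "p$k = gtr u0 $ k"
        by (cases "k = 2"; cases "k = 3"; cases "k = 8")
           (simp_all add: gtr_def u0 pk hbe hb1 ha[symmetric], simp_all add: u0_def)
    qed
    moreover have "u0 \<in> {u. u$8 = 0 \<and> u$2 \<noteq> 0}" using u0 s0 by simp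
    ultimately show ?thesis by blast
  next
    assume det: "J11f b g e1 e2 l s i * (Df b e1 e2 l s i - a) - A12f g e1 e2 l s * (b1 + (l-e2)*i) = 0"
    show ?thesis
    proof (cases "cf b g e1 e2 l s i = 0")
      case False
      define J where "J = J11f b g e1 e2 l s i"
      define A where "A = A12f g e1 e2 l s"
      define D where "D = Df b e1 e2 l s i"
      define K where "K = Kf b e1 e2 l s i"
      have "0 = (J*(D-a) - A*(b1 + (l-e2)*i)) * s" using det by (simp add: J_def A_def D_def)
      also have "\<dots> = J*D * s - a*(J * s) - A*(b1 * s) - A*(l-e2)*i * s" by (simp add: algebra_simps)
      also have "\<dots> = J*D * s - a*(J * s) - A*(K + a*i) - A*(l-e2)*i * s" using hb1s by (simp add: K_def)
      finally have "a*(J * s + A*i) = J*D * s - A*K - A*(l-e2)*i * s" by (simp add: algebra_simps)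
      then have ha: "a = Adet b g e1 e2 l s i"
        using False unfolding Adet_def cf_def J_def A_def D_def K_def by (simp add: field_simps)
      have "p = gdet u0"
      proof (subst vec_eq_iff, intro allI)
        fix k :: 8
        show "p$k = gdet u0 $ k"
          by (cases "k = 2"; cases "k = 3"; cases "k = 8")
             (simp_all add: gdet_def u0 pk hbe hb1 ha[symmetric], simp_all add: u0_def)
      qed
      moreover have "u0 \<in> {u. u$8 = 0 \<and> u$2 \<noteq> 0 \<and> cf (u$1) (u$4) (u$5) (u$6) (u$7) (u$2) (u$3) \<noteq> 0}"
        using u0 s0 False by simp
      ultimately show ?thesis by blast
    next
      case True
      have "J11f b g e1 e2 l s i * s = -b - g*(1-i) - e2 * s^2"
        using s0 unfolding J11f_def betaf_def by (simp add: field_simps power2_eq_square; simp add: algebra_simps)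
      with True have hb: "b = Bc g e1 e2 l s i"
        unfolding cf_def A12f_def Bc_def by (simp add: algebra_simps)
      have "p = gc u1"
      proof (subst vec_eq_iff, intro allI)
        fix k :: 8
        show "p$k = gc u1 $ k"
          by (cases "k = 1"; cases "k = 2"; cases "k = 3")
             (simp_all add: gc_def u1 pk hbe hb1 hb[symmetric], simp_all add: u1_def)
      qed
      moreover have "u1 \<in> {u. u$1 = 0 \<and> u$2 \<noteq> 0}" using u1 s0 by simp
      ultimately show ?thesis by blast
    qed
  qed
qed



lemma sirs_zero: "sirs_field p x = 0 \<longleftrightarrow> sirs_field p x $ 1 = 0 \<and> sirs_field p x $ 2 = 0"
  by (simp add: vec_eq_iff forall_2)

definition Tset :: "((real^2) \<times> (real^8)) set" where
  "Tset = {z. sirs_field (snd z) (fst z) $ 1 = 0 \<and> sirs_field (snd z) (fst z) $ 2 = 0 \<and>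
      Ccond (J0 (snd z) (fst z) $1$1) (J0 (snd z) (fst z) $1$2) (J0 (snd z) (fst z) $2$1) (J0 (snd z) (fst z) $2$2)}"

lemma closed_Tset: "closed Tset"
  unfolding Tset_def sirs1 sirs2 Ccond_def
  by (simp add: J0_def)
     (intro closed_Collect_conj closed_Collect_disj closed_Collect_eq closed_Collect_le continuous_intros)

lemma compact_D1: "compact D1"
proof -
  have "closed D1" unfolding D1_def
    by (intro closed_Collect_conj closed_Collect_le continuous_intros)
  moreover have "D1 \<subseteq> cbox 0 1" by (auto simp: D1_def mem_box_cart forall_2)
  then have "bounded D1" using bounded_cbox bounded_subset by blast
  ultimately show ?thesis by (simp add: compact_eq_bounded_closed)
qed

lemma Omega1_eq: "Omega1 = Omega \<inter> {p. \<exists>x. x \<in> D1 \<and> (x, p) \<in> Tset}"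
  unfolding Omega1_def Tset_def nhyp_iff sirs_zero by auto

theorem proposition4p4:
  shows "closedin (top_of_set Omega) Omega1 \<and> Omega1 \<noteq> {} \<and> Omega1 \<in> null_sets lebesgue"
proof (intro conjI)
  show "closedin (top_of_set Omega) Omega1"
    unfolding Omega1_eq
    by (rule closedin_closed_Int, rule closed_compact_projection[OF compact_D1 closed_Tset])
next
  define p0 :: "real^8" where "p0 = (\<chi> k. if k = 1 then 9/20 else if k = 2 then 301/5 else if k = 3 then 5027/2125
     else if k = 4 then 9/20 else if k = 5 then 68 else if k = 6 then 191/2 else if k = 7 then 79/4 else 4426/2125)"
  define x0 :: "real^2" where "x0 = (\<chi> k. if k = 1 then 1/5 else 2/5)"
  have "p0 \<in> Omega" by (auto simp: Omega_def p0_def)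
  moreover have "x0 \<in> D1" by (simp add: D1_def x0_def)
  moreover have "nonhyperbolic_rest_point (sirs_field p0) x0"
    unfolding nhyp_iff sirs_zero sirs1 sirs2 Ccond_def
    by (simp add: J0_def p0_def x0_def power2_eq_square)
  ultimately have "p0 \<in> Omega1" unfolding Omega1_def by blast
  then show "Omega1 \<noteq> {}" by blast
next
  have sub: "Omega1 \<subseteq> gtr ` {u. u$8 = 0 \<and> u$2 \<noteq> 0} \<union>
      gdet ` {u. u$8 = 0 \<and> u$2 \<noteq> 0 \<and> cf (u$1) (u$4) (u$5) (u$6) (u$7) (u$2) (u$3) \<noteq> 0} \<union>
      gc ` {u. u$1 = 0 \<and> u$2 \<noteq> 0}"
    unfolding Omega1_def nhyp_iff using cover by blast
  have n1: "negligible (gtr ` {u. u$8 = 0 \<and> u$2 \<noteq> 0})"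
    by (rule negligible_differentiable_image_negligible[OF order_refl])
       (auto intro: negligible_subset[OF negligible_standard_hyperplane_cart[of 8]]
             differentiable_on_subset[OF gtr_diff])
  have n2: "negligible (gdet ` {u. u$8 = 0 \<and> u$2 \<noteq> 0 \<and> cf (u$1) (u$4) (u$5) (u$6) (u$7) (u$2) (u$3) \<noteq> 0})"
    by (rule negligible_differentiable_image_negligible[OF order_refl])
       (auto intro: negligible_subset[OF negligible_standard_hyperplane_cart[of 8]]
             differentiable_on_subset[OF gdet_diff])
  have n3: "negligible (gc ` {u. u$1 = 0 \<and> u$2 \<noteq> 0})"
    by (rule negligible_differentiable_image_negligible[OF order_refl])
       (auto intro: negligible_subset[OF negligible_standard_hyperplane_cart[of 1]]
             differentiable_on_subset[OF gc_diff])
  have "negligible Omega1"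
    by (rule negligible_subset[OF _ sub]) (intro negligible_Un n1 n2 n3)
  then show "Omega1 \<in> null_sets lebesgue" by (simp add: negligible_iff_null_sets)
qed

end
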